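(* Let $\nu\in\mathbb{R}$. Define polynomials $\tilde F_s(\beta)$, $s=1,2,3,\ldots$, by $$\tilde F_1(\beta)=\tfrac18(4\nu^2-1)(\beta^2-1),\qquad \tilde F_2(\beta)=\tfrac18(4\nu^2-1)\beta(\beta^2-1),$$ $$\tilde F_{s+1}(\beta)=\tfrac12(\beta^2-1)\frac{d\tilde F_s(\beta)}{d\beta}-\tfrac12\sum_{j=1}^{s-1}\tilde F_j(\beta)\tilde F_{s-j}(\beta)\quad(s=2,3,4,\ldots),$$ and $\tilde E_s(\beta)=-\int_0^\beta \frac{\tilde F_s(b)}{b^2-1}\,db$. Define constants $a_s(\nu)$ by $a_1(\nu)=a_2(\nu)=\tfrac18(4\nu^2-1)$ and $a_{s+1}(\nu)=\tfrac12(s+1)a_s(\nu)-\tfrac12\sum_{j=1}^{s-1}a_j(\nu)a_{s-j}(\nu)$. With $\xi=\ln\!\big(z+\sqrt{z^2-1}\big)$ and $\beta=z/\sqrt{z^2-1}$, put $$\mathcal{E}_s(\nu,z)=\tilde E_s(\beta)+(-1)^{s+1}\frac{a_s(\nu)}{s\,\xi^s}.$$ Then $(z-1)^{1/2}\mathcal{E}_{2s+1}(\nu,z)$ and $\mathcal{E}_{2s}(\nu,z)$ ($s=1,2,3,\ldots$) are meromorphic functions at $z=1$.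
   Context: All multivalued functions ($\sqrt{z^2-1}$, $(z-1)^{1/2}$, the logarithm) take their principal branches in the $z$-plane cut along $(-\infty,1]$. *)

theory Defs
  imports "HOL-Complex_Analysis.Complex_Analysis" "HOL-Computational_Algebra.Polynomial"
begin

definition c0 :: "real \<Rightarrow> real" where
  "c0 \<nu> = (4 * \<nu>^2 - 1) / 8"

text \<open>The polynomials F~_s (s = 1,2,...), as complex polynomials in beta; index 0 unused.\<close>
fun Ft :: "real \<Rightarrow> nat \<Rightarrow> complex poly" where
  "Ft \<nu> 0 = 0"
| "Ft \<nu> (Suc 0) = smult (of_real (c0 \<nu>)) [:-1, 0, 1:]"
| "Ft \<nu> (Suc (Suc 0)) = smult (of_real (c0 \<nu>)) ([:0, 1:] * [:-1, 0, 1:])"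
| "Ft \<nu> (Suc (Suc (Suc n))) =
     smult (1/2) ([:-1, 0, 1:] * pderiv (Ft \<nu> (Suc (Suc n))))
     - smult (1/2) (\<Sum>j\<in>{1..Suc n}. Ft \<nu> j * Ft \<nu> (Suc (Suc n) - j))"

definition Et :: "real \<Rightarrow> nat \<Rightarrow> complex \<Rightarrow> complex" where
  "Et \<nu> s \<beta> = - contour_integral (linepath 0 \<beta>) (\<lambda>b. poly (Ft \<nu> s) b / (b^2 - 1))"

text \<open>The constants a_s(nu); index 0 unused.\<close>
fun a :: "real \<Rightarrow> nat \<Rightarrow> real" where
  "a \<nu> 0 = 0"
| "a \<nu> (Suc 0) = c0 \<nu>"
| "a \<nu> (Suc (Suc 0)) = c0 \<nu>"
| "a \<nu> (Suc (Suc (Suc n))) =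
     (1/2) * real (Suc (Suc (Suc n))) * a \<nu> (Suc (Suc n))
     - (1/2) * (\<Sum>j\<in>{1..Suc n}. a \<nu> j * a \<nu> (Suc (Suc n) - j))"

text \<open>Branch of sqrt(z^2-1) analytic in the plane cut along (-infinity,1], positive for z>1.\<close>
definition sqrtz2m1 :: "complex \<Rightarrow> complex" where
  "sqrtz2m1 z = csqrt (z - 1) * csqrt (z + 1)"

definition xi :: "complex \<Rightarrow> complex" where
  "xi z = Ln (z + sqrtz2m1 z)"

definition beta :: "complex \<Rightarrow> complex" where
  "beta z = z / sqrtz2m1 z"

definition calE :: "real \<Rightarrow> nat \<Rightarrow> complex \<Rightarrow> complex" where
  "calE \<nu> s z = Et \<nu> s (beta z) + (-1)^(s+1) * of_real (a \<nu> s) / (of_nat s * xi z ^ s)"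

definition cut :: "complex set" where
  "cut = {x. Im x = 0 \<and> Re x \<le> 1}"

end

theory Submission
  imports Defs
begin

abbreviation DD :: "complex poly" where "DD \<equiv> [:-1,0,1:]"
abbreviation rf :: "complex poly \<Rightarrow> complex poly" where "rf p \<equiv> pcompose p [:0,-1:]"

lemma rf_DD: "rf DD = DD" by (simp add: pcompose_pCons)

lemma rf_pderiv: "rf (pderiv p) = - pderiv (rf p)"
  by (simp add: pderiv_pcompose pderiv_pCons)

lemma smult_sum_right: "smult (c::complex) (sum f A) = (\<Sum>i\<in>A. smult c (f i))"
  by (induction A rule: infinite_finite_induct) (simp_all add: smult_add_right)

lemma Ft_dvd: "DD dvd Ft \<nu> n"
proof (induction n rule: less_induct)
  case (less n)
  consider "n = 0" | "n = Suc 0" | "n = Suc (Suc 0)" | m where "n = Suc (Suc (Suc m))"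
    by (metis One_nat_def Suc_1 not0_implies_Suc)
  then show ?case
  proof cases
    case 1 then show ?thesis by simp
  next
    case 2 then show ?thesis by (simp del: smult_pCons add: dvd_smult)
  next
    case 3 then show ?thesis by (simp only: Ft.simps) (intro dvd_smult dvd_mult dvd_refl)
  next
    case 4
    then have n: "n = Suc (Suc (Suc m))" by simp
    have "DD dvd Ft \<nu> j * Ft \<nu> (Suc (Suc m) - j)" if "j \<in> {1..Suc m}" for j
      using less[of j] that n by (intro dvd_mult2) auto
    then have "DD dvd (\<Sum>j\<in>{1..Suc m}. Ft \<nu> j * Ft \<nu> (Suc (Suc m) - j))"
      by (intro dvd_sum) auto
    then show ?thesis unfolding n
      by (simp only: Ft.simps) (intro dvd_diff dvd_smult dvd_mult2 dvd_refl)
  qed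
qed

lemma Ft_par: "rf (Ft \<nu> n) = smult ((-1)^(n+1)) (Ft \<nu> n)"
proof (induction n rule: less_induct)
  case (less n)
  consider "n = 0" | "n = Suc 0" | "n = Suc (Suc 0)" | m where "n = Suc (Suc (Suc m))"
    by (metis One_nat_def Suc_1 not0_implies_Suc)
  then show ?case
  proof cases
    case 1 then show ?thesis by simp
  next
    case 2 then show ?thesis by (simp del: smult_pCons add: pcompose_smult rf_DD)
  next
    case 3 then show ?thesis by (simp add: pcompose_smult pcompose_mult pcompose_pCons)
  next
    case 4
    then have n: "n = Suc (Suc (Suc m))" by simp
    have "rf (Ft \<nu> j * Ft \<nu> (Suc (Suc m) - j)) = smult ((-1)^(n+1)) (Ft \<nu> j * Ft \<nu> (Suc (Suc m) - j))" 
      if "j \<in> {1..Suc m}" for j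
    proof -
      have e: "(j + 1) + (Suc (Suc m) - j + 1) = n + 1" using that n by auto
      have "rf (Ft \<nu> j * Ft \<nu> (Suc (Suc m) - j)) = smult ((-1)^(j+1) * (-1)^(Suc (Suc m) - j + 1)) (Ft \<nu> j * Ft \<nu> (Suc (Suc m) - j))"
        using less[of j] less[of "Suc (Suc m) - j"] that n by (simp add: pcompose_mult mult_ac)
      also have "(-1::complex)^(j+1) * (-1)^(Suc (Suc m) - j + 1) = (-1)^(n+1)"
        by (subst power_add[symmetric]) (simp only: e)
      finally show ?thesis .
    qed
    then have S: "rf (\<Sum>j\<in>{1..Suc m}. Ft \<nu> j * Ft \<nu> (Suc (Suc m) - j)) = smult ((-1)^(n+1)) (\<Sum>j\<in>{1..Suc m}. Ft \<nu> j * Ft \<nu> (Suc (Suc m) - j))"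
      unfolding pcompose_sum smult_sum_right by (rule sum.cong[OF refl]) blast
    have P: "rf (pderiv (Ft \<nu> (Suc (Suc m)))) = smult ((-1)^(n+1)) (pderiv (Ft \<nu> (Suc (Suc m))))"
      using less[of "Suc (Suc m)"] n by (simp add: rf_pderiv pderiv_smult pderiv_minus)
    show ?thesis unfolding n
      apply (simp only: Ft.simps)
      apply (simp only: pcompose_diff pcompose_smult pcompose_mult rf_DD P[unfolded n] S[unfolded n])
      apply (simp only: mult_smult_right smult_smult smult_diff_right)
      apply (simp only: mult.commute)
      done
  qed
qed

lemma antideriv_ex: "\<exists>Q. pderiv Q = (P::complex poly)"
proof -
  define Q where "Q = (\<Sum>i\<le>degree P. monom (coeff P i / of_nat (Suc i)) (Suc i))"
  have "pderiv Q = (\<Sum>i\<le>degree P. pderiv (monom (coeff P i / of_nat (Suc i)) (Suc i)))"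
    unfolding Q_def using higher_pderiv_sum[of 1] by simp
  also have "\<dots> = (\<Sum>i\<le>degree P. monom (coeff P i) i)"
    by (intro sum.cong refl) (simp add: pderiv_monom del: of_nat_Suc)
  also have "\<dots> = P" by (rule poly_as_sum_of_monoms)
  finally show ?thesis by blast
qed

lemma Et_poly: "\<exists>Q. (\<forall>b. Et \<nu> n b = poly Q b) \<and> (\<forall>b. poly Q (-b) = (-1)^n * poly Q b)"
proof -
  define \<epsilon> :: complex where "\<epsilon> = (-1)^(n+1)"
  obtain P where FP: "Ft \<nu> n = DD * P" using Ft_dvd[of \<nu> n] by (auto elim: dvdE)
  have "DD * rf P = DD * smult \<epsilon> P"
    using Ft_par[of \<nu> n] unfolding FP \<epsilon>_def by (simp only: pcompose_mult rf_DD mult_smult_right)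
  moreover have "DD \<noteq> 0" by simp
  ultimately have rfP: "rf P = smult \<epsilon> P" using mult_left_cancel by blast
  obtain Q1 where Q1: "pderiv Q1 = P" using antideriv_ex by blast
  define Q0 where "Q0 = Q1 - [:poly Q1 0:]"
  have dQ0: "pderiv Q0 = P" unfolding Q0_def by (simp add: pderiv_diff Q1)
  have Q00: "poly Q0 0 = 0" unfolding Q0_def by simp
  define R where "R = rf Q0 + smult \<epsilon> Q0"
  have "pderiv R = - rf P + smult \<epsilon> P"
    unfolding R_def using rf_pderiv[of Q0] by (simp add: pderiv_add pderiv_smult dQ0)
  then have "pderiv R = 0" by (simp add: rfP)
  then obtain h where "R = [:h:]" using pderiv_iszero by blast
  moreover have "poly R 0 = 0" unfolding R_def by (simp add: poly_pcompose Q00)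
  ultimately have "R = 0" by simp
  then have parQ0: "poly Q0 (-x) = - \<epsilon> * poly Q0 x" for x
  proof -
    have "poly R x = 0" using \<open>R = 0\<close> by simp
    moreover have "poly R x = poly Q0 (-x) + \<epsilon> * poly Q0 x" unfolding R_def by (simp add: poly_pcompose)
    ultimately show ?thesis by (simp add: eq_neg_iff_add_eq_0)
  qed
  have int: "((\<lambda>b. poly (Ft \<nu> n) b / (b^2 - 1)) has_contour_integral poly Q0 \<beta>) (linepath 0 \<beta>)" for \<beta>
  proof -
    have "(poly P has_contour_integral (poly Q0 (pathfinish (linepath 0 \<beta>)) - poly Q0 (pathstart (linepath 0 \<beta>)))) (linepath 0 \<beta>)"
      by (rule contour_integral_primitive[of UNIV]) (auto simp flip: dQ0 simp del: linepath_0)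
    then have "((\<lambda>x. poly P (linepath 0 \<beta> x) * (\<beta> - 0)) has_integral poly Q0 \<beta>) {0..1}"
      by (simp add: has_contour_integral_linepath Q00)
    note I = this
    have "((\<lambda>x. poly (Ft \<nu> n) (linepath 0 \<beta> x) / ((linepath 0 \<beta> x)^2 - 1) * (\<beta> - 0)) has_integral poly Q0 \<beta>) {0..1}"
    proof (rule has_integral_spike_finite[of "{Re (1/\<beta>), Re (-1/\<beta>)}", OF _ _ I])
      fix t assume t: "t \<in> {0..1} - {Re (1/\<beta>), Re (-1/\<beta>)}"
      have lp: "linepath 0 \<beta> t = of_real t * \<beta>" by (simp add: linepath_def scaleR_conv_of_real)
      have "(of_real t * \<beta>)^2 \<noteq> 1"
      proof
        assume "(of_real t * \<beta>)^2 = 1"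
        then have "of_real t * \<beta> = 1 \<or> of_real t * \<beta> = -1" by (simp add: power2_eq_1_iff)
        moreover have "\<beta> \<noteq> 0" using calculation by auto
        ultimately have "of_real t = 1/\<beta> \<or> of_real t = -1/\<beta>"
          by (metis nonzero_mult_div_cancel_right minus_divide_left)
        then have "t = Re (1/\<beta>) \<or> t = Re (-1/\<beta>)" by (metis Re_complex_of_real)
        with t show False by auto
      qed
      then show "poly (Ft \<nu> n) (linepath 0 \<beta> t) / ((linepath 0 \<beta> t)^2 - 1) * (\<beta> - 0) = poly P (linepath 0 \<beta> t) * (\<beta> - 0)"
        unfolding lp FP by (simp add: power2_eq_square field_simps)
    qed simp
    then show ?thesis by (simp add: has_contour_integral_linepath)
  qed
  show ?thesis
  proof (intro exI conjI allI)
    fix b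
    show "Et \<nu> n b = poly (-Q0) b"
      unfolding Et_def using contour_integral_unique[OF int[of b]] by simp
    show "poly (-Q0) (-b) = (-1)^n * poly (-Q0) b"
      by (simp add: parQ0 \<epsilon>_def)
  qed
qed

lemma csqrt_tendsto0: "(csqrt \<longlongrightarrow> 0) (at 0 within S)"
proof (rule tendsto_norm_zero_cancel)
  have "((\<lambda>x. sqrt (norm x)) \<longlongrightarrow> sqrt (norm (0::complex))) (at 0 within S)"
    by (intro tendsto_intros)
  then show "((\<lambda>x. norm (csqrt x)) \<longlongrightarrow> 0) (at 0 within S)" by simp
qed

lemma even_sqrt_holo:
  assumes hol: "f holomorphic_on ball 0 r" and ev: "\<And>t. t \<in> ball 0 r \<Longrightarrow> f (-t) = f t"
    and r: "r > 0"
  shows "(\<lambda>v. f (csqrt v)) holomorphic_on ball 0 (r^2)"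
proof -
  have cs: "norm (csqrt v) < r" if "v \<in> ball 0 (r^2)" for v
  proof -
    have "norm v < r^2" using that by simp
    then have "sqrt (norm v) < sqrt (r^2)" by (rule real_sqrt_less_mono)
    then show ?thesis using r by simp
  qed
  define U1 where "U1 = ball 0 (r^2) \<inter> - (\<real>\<^sub>\<le>\<^sub>0 :: complex set)"
  define U2 where "U2 = ball 0 (r^2) \<inter> (\<lambda>x. -x) ` (- (\<real>\<^sub>\<le>\<^sub>0 :: complex set))"
  have oU1: "open U1" unfolding U1_def by (intro open_Int open_ball open_Compl closed_nonpos_Reals_complex)
  have oU2: "open U2" unfolding U2_def
    by (intro open_Int open_ball open_negations open_Compl closed_nonpos_Reals_complex)
  have H1: "(\<lambda>v. f (csqrt v)) holomorphic_on U1"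
  proof -
    have "csqrt ` U1 \<subseteq> ball 0 r" using cs by (auto simp: U1_def)
    moreover have "csqrt holomorphic_on U1"
      using holomorphic_on_subset[OF holomorphic_on_csqrt, of U1] by (auto simp: U1_def)
    ultimately show ?thesis
      using holomorphic_on_compose_gen[of csqrt U1 f "ball 0 r"] hol by (simp add: o_def)
  qed
  have H2': "(\<lambda>v. f (\<i> * csqrt (-v))) holomorphic_on U2"
  proof -
    have "(\<lambda>v. \<i> * csqrt (-v)) holomorphic_on U2"
      unfolding U2_def by (intro holomorphic_intros) auto
    moreover have "(\<lambda>v. \<i> * csqrt (-v)) ` U2 \<subseteq> ball 0 r"
      using cs by (auto simp: U2_def norm_mult)
    ultimately show ?thesis
      using holomorphic_on_compose_gen[of "\<lambda>v. \<i> * csqrt (-v)" U2 f "ball 0 r"] hol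
      by (auto simp: o_def)
  qed
  have H2: "(\<lambda>v. f (csqrt v)) holomorphic_on U2"
  proof (rule holomorphic_transform[OF H2'])
    fix v assume v: "v \<in> U2"
    have e: "(\<i> * csqrt (-v))^2 = (csqrt v)^2" by (simp add: power_mult_distrib)
    have "\<i> * csqrt (-v) = csqrt v \<or> \<i> * csqrt (-v) = - csqrt v" using e power2_eq_iff by blast
    moreover have "csqrt v \<in> ball 0 r" using cs v by (auto simp: U2_def)
    ultimately show "f (\<i> * csqrt (-v)) = f (csqrt v)" using ev by auto
  qed
  have "ball 0 (r^2) - {0} \<subseteq> U1 \<union> U2"
  proof
    fix v :: complex assume v: "v \<in> ball 0 (r^2) - {0}"
    show "v \<in> U1 \<union> U2"
    proof (cases "v \<in> \<real>\<^sub>\<le>\<^sub>0")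
      case True
      then have "-v \<notin> \<real>\<^sub>\<le>\<^sub>0" using v by (auto simp: complex_nonpos_Reals_iff complex_eq_iff)
      then have "v \<in> (\<lambda>x. -x) ` (- \<real>\<^sub>\<le>\<^sub>0)" by (intro image_eqI[of _ _ "-v"]) auto
      then show ?thesis using v by (auto simp: U2_def)
    qed (use v in \<open>auto simp: U1_def\<close>)
  qed
  then have Hd: "(\<lambda>v. f (csqrt v)) holomorphic_on (ball 0 (r^2) - {0})"
    using holomorphic_on_Un[OF H1 H2 oU1 oU2] holomorphic_on_subset by blast
  show ?thesis
  proof (rule no_isolated_singularity'[where K="{0}"])
    fix z :: complex assume "z \<in> {0}"
    then have z: "z = 0" by simp
    have "isCont f 0"
      using hol r by (intro holomorphic_on_imp_continuous_on[THEN continuous_on_interior]) (auto simp: interior_open)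
    then show "((\<lambda>v. f (csqrt v)) \<longlongrightarrow> f (csqrt z)) (at z within ball 0 (r^2))"
      unfolding z using isCont_tendsto_compose[OF _ csqrt_tendsto0] by simp
  qed (use Hd in auto)
qed

definition AA :: "complex \<Rightarrow> complex" where "AA t = Ln (t + csqrt (1 + t^2))"

lemma AA_aux:
  assumes "norm t < 1/2"
  shows "Re (1 + t^2) > 0" "Re (t + csqrt (1 + t^2)) > 0"
proof -
  have "(norm t)^2 < (1/2)^2" using assms by (intro power_strict_mono) auto
  moreover have "(norm t)^2 = (Re t)^2 + (Im t)^2" by (simp add: cmod_power2)
  moreover have "(1/2::real)^2 = 1/4" by (simp add: power2_eq_square)
  ultimately have n2: "(Re t)^2 + (Im t)^2 < 1/4" by linarith
  have R: "Re (1 + t^2) = 1 + (Re t)^2 - (Im t)^2" by (simp add: Re_power2)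
  have R2: "Re (1 + t^2) > 3/4" using n2 R zero_le_power2[of "Re t"] by linarith
  then show "Re (1 + t^2) > 0" by linarith
  define c where "c = csqrt (1 + t^2)"
  have "Re (c^2) = Re (1 + t^2)" unfolding c_def by simp
  then have "(Re c)^2 - (Im c)^2 > 3/4" using R2 by (simp add: Re_power2)
  then have c2: "(Re c)^2 > 1/4" using zero_le_power2[of "Im c"] by linarith
  have c0: "Re c \<ge> 0" unfolding c_def by (rule Re_csqrt)
  have "Re c > 1/2"
  proof (rule ccontr)
    assume "\<not> Re c > 1/2"
    then have "(Re c)^2 \<le> (1/2)^2" using c0 by (intro power_mono) auto
    with c2 show False by (simp add: power2_eq_square)
  qed
  moreover have "\<bar>Re t\<bar> < 1/2" using assms abs_Re_le_cmod[of t] by linarith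
  ultimately show "Re (t + csqrt (1 + t^2)) > 0" unfolding c_def by simp
qed

lemma AA_nonpos:
  assumes "norm t < 1/2"
  shows "1 + t^2 \<notin> \<real>\<^sub>\<le>\<^sub>0" "t + csqrt (1 + t^2) \<notin> \<real>\<^sub>\<le>\<^sub>0"
  using AA_aux[OF assms] complex_nonpos_Reals_iff by (metis not_le)+

lemma AA_hol: "AA holomorphic_on ball 0 (1/2)"
proof -
  have "(\<lambda>t. Ln (t + csqrt (1 + t^2))) holomorphic_on ball 0 (1/2)"
    using AA_nonpos by (intro holomorphic_intros) auto
  then show ?thesis unfolding AA_def[abs_def] .
qed

lemma AA_odd:
  assumes "norm t < 1/2"
  shows "AA (-t) = - AA t"
proof -
  define c where "c = csqrt (1 + t^2)"
  have pos: "Re (t + c) > 0" using AA_aux[OF assms] unfolding c_def by simp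
  have nz: "t + c \<noteq> 0"
  proof
    assume "t + c = 0"
    then have "Re (t + c) = 0" by simp
    with pos show False by simp
  qed
  have "(t + c) * (c - t) = 1" unfolding c_def by (simp add: algebra_simps power2_eq_square[symmetric])
  then have "c - t = inverse (t + c)" using nz by (simp add: field_simps)
  then have "AA (-t) = Ln (inverse (t + c))" unfolding AA_def c_def by simp
  also have "\<dots> = - Ln (t + c)" using pos by (intro Ln_inverse) (auto simp: complex_nonpos_Reals_iff)
  finally show ?thesis unfolding AA_def c_def .
qed

definition KK :: "complex \<Rightarrow> complex" where "KK v = (AA (csqrt v))^2"
definition LL :: "complex \<Rightarrow> complex" where "LL v = csqrt v * AA (csqrt v)"

lemma KK_hol: "KK holomorphic_on ball 0 (1/4)"
proof -
  have "(\<lambda>v. (\<lambda>t. AA t ^ 2) (csqrt v)) holomorphic_on ball 0 ((1/2)^2)"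
  proof (rule even_sqrt_holo)
    show "(\<lambda>t. AA t ^ 2) holomorphic_on ball 0 (1/2)" using AA_hol by (intro holomorphic_intros)
    show "AA (-t) ^ 2 = AA t ^ 2" if "t \<in> ball 0 (1/2)" for t using AA_odd[of t] that by simp
  qed simp
  then show ?thesis unfolding KK_def[abs_def] by (simp add: power2_eq_square)
qed

lemma LL_hol: "LL holomorphic_on ball 0 (1/4)"
proof -
  have "(\<lambda>v. (\<lambda>t. t * AA t) (csqrt v)) holomorphic_on ball 0 ((1/2)^2)"
  proof (rule even_sqrt_holo)
    show "(\<lambda>t. t * AA t) holomorphic_on ball 0 (1/2)" using AA_hol by (intro holomorphic_intros)
    show "(-t) * AA (-t) = t * AA t" if "t \<in> ball 0 (1/2)" for t using AA_odd[of t] that by simp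
  qed simp
  then show ?thesis unfolding LL_def[abs_def] by (simp add: power2_eq_square)
qed

lemma csqrt_sq_cases: "csqrt (q^2) = q \<or> csqrt (q^2) = - q"
  using power2_eq_iff[of "csqrt (q^2)" q] by simp

lemma KK_sq: "norm q < 1/2 \<Longrightarrow> KK (q^2) = AA q ^ 2"
  using csqrt_sq_cases[of q] AA_odd[of q] unfolding KK_def by auto

lemma LL_sq: "norm q < 1/2 \<Longrightarrow> LL (q^2) = q * AA q"
  using csqrt_sq_cases[of q] AA_odd[of q] unfolding LL_def by auto

lemma pointwise:
  assumes z: "norm (z - 1) < 1/4" "z \<noteq> 1"
  shows "xi z ^ 2 = 4 * KK ((z-1)/2)"
    and "csqrt (z-1) * xi z = 2 * of_real (sqrt 2) * LL ((z-1)/2)"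
    and "beta z ^ 2 = z^2 / ((z-1)*(z+1))"
    and "csqrt (z-1) * beta z = z / csqrt (z+1)"
proof -
  define uu where "uu = csqrt (z-1)"
  define vv where "vv = csqrt (z+1)"
  define s2 where "s2 = complex_of_real (sqrt 2)"
  have s2sq: "s2^2 = 2" unfolding s2_def by (simp flip: of_real_power)
  have s2nz: "s2 \<noteq> 0" unfolding s2_def by simp
  define q where "q = uu / s2"
  define p where "p = vv / s2"
  have u2: "uu^2 = z - 1" unfolding uu_def by simp
  have v2: "vv^2 = z + 1" unfolding vv_def by simp
  have unz: "uu \<noteq> 0" unfolding uu_def using z by simp
  have q2: "q^2 = (z-1)/2" unfolding q_def by (simp add: power_divide u2 s2sq)
  have nq: "norm q < 1/2"
  proof (rule ccontr)
    assume "\<not> norm q < 1/2"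
    then have "(1/2)^2 \<le> (norm q)^2" by (intro power_mono) auto
    also have "(norm q)^2 = norm (z-1) / 2" by (simp add: norm_power[symmetric] q2 norm_divide)
    finally show False using z by (simp add: power2_eq_square)
  qed
  have "Re (z - 1) > -1/4" using z abs_Re_le_cmod[of "z-1"] by linarith
  then have Rez: "Re (z + 1) > 0" by simp
  have Rev: "Re vv > 0"
  proof -
    have "Re vv > 0 \<or> Re vv = 0 \<and> 0 \<le> Im vv" unfolding vv_def by (rule csqrt_principal)
    moreover have "Re vv \<noteq> 0"
    proof
      assume "Re vv = 0"
      then have "Re (vv^2) = -((Im vv)^2)" by (simp add: Re_power2)
      then have "Re (z+1) \<le> 0" using v2 by simp
      with Rez show False by simp
    qed
    ultimately show ?thesis by simp
  qed
  have Rep: "Re p > 0" unfolding p_def s2_def using Rev by (simp add: Re_divide_of_real)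
  have p2: "p^2 = 1 + q^2" unfolding p_def by (simp add: power_divide v2 s2sq q2 field_simps)
  have cp: "csqrt (1 + q^2) = p" using p2 Rep by (intro csqrt_unique) auto
  have AAq: "AA q = Ln (q + p)" unfolding AA_def cp ..
  have Rew: "Re (q + p) > 0" using AA_aux(2)[OF nq] unfolding cp .
  have sq: "z + sqrtz2m1 z = (q + p)^2"
  proof -
    have "(q + p)^2 = (uu + vv)^2 / s2^2" unfolding q_def p_def by (simp add: power_divide add_divide_distrib[symmetric])
    also have "\<dots> = (uu^2 + vv^2 + 2 * uu * vv) / 2" by (simp add: s2sq power2_sum)
    also have "\<dots> = z + uu * vv" by (simp add: u2 v2 field_simps)
    finally show ?thesis unfolding sqrtz2m1_def uu_def vv_def by simp
  qed
  have xiz: "xi z = 2 * AA q"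
  proof -
    define w where "w = q + p"
    have wnz: "w \<noteq> 0" using Rew unfolding w_def by (metis zero_complex.sel(1) less_irrefl)
    have im: "\<bar>Im (Ln w)\<bar> < pi/2" using Rew unfolding w_def by (rule Re_Ln_pos_lt_imp)
    have "exp (2 * Ln w) = exp (Ln w + Ln w)" by (simp only: mult_2)
    also have "\<dots> = exp (Ln w) * exp (Ln w)" by (rule exp_add)
    also have "\<dots> = w^2" using wnz by (simp add: power2_eq_square)
    finally have ew: "w^2 = exp (2 * Ln w)" by simp
    have i1: "-pi < Im (2 * Ln w)" "Im (2 * Ln w) \<le> pi" using im by auto
    have "Ln (w^2) = 2 * Ln w" unfolding ew by (rule Ln_exp[OF i1])
    then show ?thesis unfolding xi_def sq AAq w_def .
  qed
  show "xi z ^ 2 = 4 * KK ((z-1)/2)"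
    unfolding xiz q2[symmetric] KK_sq[OF nq] by (simp add: power_mult_distrib)
  have "uu = s2 * q" unfolding q_def using s2nz by simp
  then show "csqrt (z-1) * xi z = 2 * of_real (sqrt 2) * LL ((z-1)/2)"
    unfolding xiz q2[symmetric] LL_sq[OF nq] uu_def[symmetric] s2_def[symmetric] by simp
  show "beta z ^ 2 = z^2 / ((z-1)*(z+1))"
    unfolding beta_def sqrtz2m1_def by (simp add: power_divide power_mult_distrib)
  show "csqrt (z-1) * beta z = z / csqrt (z+1)"
    unfolding beta_def sqrtz2m1_def uu_def[symmetric] vv_def[symmetric] using unz by (simp add: field_simps)
qed

lemma term_even: "(x::complex)^k + (-x)^k = 2 * (if even k then (x^2)^(k div 2) else 0)"
proof (cases "even k")
  case True
  then obtain m where "k = 2*m" by (auto elim: evenE)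
  then show ?thesis by (simp add: power_mult)
next
  case False
  then obtain m where "k = 2*m+1" using oddE by blast
  then show ?thesis by simp
qed

lemma term_odd: "(x::complex)^k - (-x)^k = 2 * (if odd k then x * (x^2)^(k div 2) else 0)"
proof (cases "even k")
  case True
  then obtain m where "k = 2*m" by (auto elim: evenE)
  then show ?thesis by simp
next
  case False
  then obtain m where "k = 2*m+1" using oddE by blast
  then show ?thesis by (simp add: power_mult)
qed

lemma poly_even_sum:
  fixes Q :: "complex poly"
  assumes "\<forall>x. poly Q (-x) = poly Q x"
  shows "poly Q x = (\<Sum>k\<le>degree Q. coeff Q k * (if even k then (x^2)^(k div 2) else 0))"
proof -
  have "2 * poly Q x = poly Q x + poly Q (-x)" using assms by simp
  also have "\<dots> = (\<Sum>k\<le>degree Q. coeff Q k * (x^k + (-x)^k))"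
    by (simp add: poly_altdef sum.distrib[symmetric] distrib_left)
  also have "\<dots> = 2 * (\<Sum>k\<le>degree Q. coeff Q k * (if even k then (x^2)^(k div 2) else 0))"
    unfolding term_even sum_distrib_left by (rule sum.cong) (simp_all add: mult_ac)
  finally show ?thesis by simp
qed

lemma poly_odd_sum:
  fixes Q :: "complex poly"
  assumes "\<forall>x. poly Q (-x) = - poly Q x"
  shows "poly Q x = (\<Sum>k\<le>degree Q. coeff Q k * (if odd k then x * (x^2)^(k div 2) else 0))"
proof -
  have "2 * poly Q x = poly Q x - poly Q (-x)" using assms by simp
  also have "\<dots> = (\<Sum>k\<le>degree Q. coeff Q k * (x^k - (-x)^k))"
    by (simp add: poly_altdef sum_subtractf[symmetric] right_diff_distrib)
  also have "\<dots> = 2 * (\<Sum>k\<le>degree Q. coeff Q k * (if odd k then x * (x^2)^(k div 2) else 0))"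
    unfolding term_odd sum_distrib_left by (rule sum.cong) (simp_all add: mult_ac)
  finally show ?thesis by simp
qed

lemma div_lemma:
  fixes u c N y :: complex
  shows "u * (c / (N * y^(2 * s+1))) = c * (u*y) / (N * (y^2)^(s+1))"
proof (cases "y = 0 \<or> N = 0")
  case True then show ?thesis by auto
next
  case False
  have e: "2*(s+1) = Suc (2 * s + 1)" by simp
  have "(y^2)^(s+1) = y^(2*(s+1))" using power_mult[of y 2 "s+1"] by simp
  also have "\<dots> = y^(2 * s+1) * y" unfolding e by (rule power_Suc2)
  finally have "(y^2)^(s+1) = y^(2 * s+1) * y" .
  then show ?thesis using False by (simp add: field_simps)
qed

lemma mero_comp:
  assumes "F holomorphic_on ball 0 (1/4)"
  shows "(\<lambda>z. F ((z-1)/2)) meromorphic_on {1}"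
proof -
  have "(F \<circ> (\<lambda>z. (z-1)/2)) holomorphic_on ball 1 (1/2)"
  proof (rule holomorphic_on_compose_gen[OF _ assms])
    show "(\<lambda>z. (z-1)/2) holomorphic_on ball 1 (1/2)" by (intro holomorphic_intros) auto
    show "(\<lambda>z::complex. (z-1)/2) ` ball 1 (1/2) \<subseteq> ball 0 (1/4)"
      by (auto simp: dist_norm norm_divide norm_minus_commute)
  qed
  then have "(\<lambda>z. F ((z-1)/2)) analytic_on ball 1 (1/2)" by (simp add: analytic_on_open o_def)
  then show ?thesis by (rule analytic_on_imp_meromorphic_on[OF analytic_on_subset]) auto
qed

lemma mero_sqrt: "(\<lambda>z. csqrt (z+1)) meromorphic_on {1}"
proof -
  have "(\<lambda>z. csqrt (z+1)) holomorphic_on ball 1 1"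
  proof (intro holomorphic_intros)
    fix z :: complex assume "z \<in> ball 1 1"
    then have "Re (1 - z) < 1" using abs_Re_le_cmod[of "1-z"] by (auto simp: dist_norm)
    then have "Re (z+1) > 0" by simp
    then show "z + 1 \<notin> \<real>\<^sub>\<le>\<^sub>0" by (auto simp: complex_nonpos_Reals_iff)
  qed
  then have "(\<lambda>z. csqrt (z+1)) analytic_on ball 1 1" by (simp add: analytic_on_open)
  then show ?thesis by (rule analytic_on_imp_meromorphic_on[OF analytic_on_subset]) auto
qed

theorem lemma3p1:
  fixes \<nu> :: real and s :: nat
  assumes "s \<ge> 1"
  shows "(\<exists>g. g meromorphic_on {1} \<and>
            (\<forall>\<^sub>F z in at 1. z \<notin> cut \<longrightarrow> g z = csqrt (z - 1) * calE \<nu> (2 * s + 1) z))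
       \<and> (\<exists>g. g meromorphic_on {1} \<and>
            (\<forall>\<^sub>F z in at 1. z \<notin> cut \<longrightarrow> g z = calE \<nu> (2 * s) z))"
proof
  have mK: "(\<lambda>z. KK ((z-1)/2)) meromorphic_on {1}" by (rule mero_comp[OF KK_hol])
  have mL: "(\<lambda>z. LL ((z-1)/2)) meromorphic_on {1}" by (rule mero_comp[OF LL_hol])
  have mB: "(\<lambda>z. z^2 / ((z-1)*(z+1))) meromorphic_on {1}" by (intro meromorphic_intros)
  show "\<exists>g. g meromorphic_on {1} \<and>
            (\<forall>\<^sub>F z in at 1. z \<notin> cut \<longrightarrow> g z = csqrt (z - 1) * calE \<nu> (2 * s + 1) z)"
  proof -
    obtain Q where EQ: "\<forall>b. Et \<nu> (2 * s+1) b = poly Q b"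
      and PQ: "\<forall>b. poly Q (-b) = (-1)^(2 * s+1) * poly Q b"
      using Et_poly by blast
    have PQ': "\<forall>b. poly Q (-b) = - poly Q b" using PQ by simp
    define g where "g z = (\<Sum>k\<le>degree Q. coeff Q k * (if odd k then z / csqrt (z+1) * (z^2/((z-1)*(z+1)))^(k div 2) else 0))
       + (-1)^(2 * s+1+1) * of_real (a \<nu> (2 * s+1)) * (2 * of_real (sqrt 2) * LL ((z-1)/2)) / (of_nat (2 * s+1) * (4 * KK ((z-1)/2))^(s+1))" for z
    have "g meromorphic_on {1}"
    proof -
      have "(\<lambda>z. coeff Q k * (if odd k then z / csqrt (z+1) * (z^2/((z-1)*(z+1)))^(k div 2) else 0)) meromorphic_on {1}" for k
        by (cases "odd k") (auto intro!: meromorphic_intros mero_sqrt mB)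
      then have S: "(\<lambda>z. \<Sum>k\<le>degree Q. coeff Q k * (if odd k then z / csqrt (z+1) * (z^2/((z-1)*(z+1)))^(k div 2) else 0)) meromorphic_on {1}"
        by (intro meromorphic_on_sum)
      show ?thesis unfolding g_def[abs_def]
        by (rule meromorphic_on_add[OF S]) (intro meromorphic_intros mK mL)
    qed
    moreover have "\<forall>\<^sub>F z in at 1. z \<notin> cut \<longrightarrow> g z = csqrt (z - 1) * calE \<nu> (2 * s + 1) z"
      unfolding eventually_at
    proof (intro exI[of _ "1/4"] conjI ballI impI)
      fix z :: complex assume z: "z \<noteq> 1 \<and> dist z 1 < 1/4"
      then have z1: "norm (z - 1) < 1/4" "z \<noteq> 1" by (auto simp: dist_norm)
      note pw = pointwise[OF z1]
      have A: "csqrt (z-1) * poly Q (beta z) = (\<Sum>k\<le>degree Q. coeff Q k * (if odd k then z / csqrt (z+1) * (z^2/((z-1)*(z+1)))^(k div 2) else 0))"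
        unfolding poly_odd_sum[OF PQ', of "beta z"] sum_distrib_left
        by (rule sum.cong) (auto simp: pw(3,4)[symmetric] mult_ac)
      have B: "csqrt (z-1) * ((-1)^(2 * s+1+1) * of_real (a \<nu> (2 * s+1)) / (of_nat (2 * s+1) * xi z ^ (2 * s+1)))
          = (-1)^(2 * s+1+1) * of_real (a \<nu> (2 * s+1)) * (2 * of_real (sqrt 2) * LL ((z-1)/2)) / (of_nat (2 * s+1) * (4 * KK ((z-1)/2))^(s+1))"
        unfolding div_lemma pw(1,2) ..
      have "csqrt (z - 1) * calE \<nu> (2 * s + 1) z = csqrt (z-1) * poly Q (beta z) + csqrt (z-1) * ((-1)^(2 * s+1+1) * of_real (a \<nu> (2 * s+1)) / (of_nat (2 * s+1) * xi z ^ (2 * s+1)))"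
        unfolding calE_def EQ[rule_format] by (simp only: distrib_left)
      also have "\<dots> = g z" unfolding A B g_def ..
      finally show "g z = csqrt (z - 1) * calE \<nu> (2 * s + 1) z" by simp
    qed simp
    ultimately show ?thesis by blast
  qed
  show "\<exists>g. g meromorphic_on {1} \<and>
            (\<forall>\<^sub>F z in at 1. z \<notin> cut \<longrightarrow> g z = calE \<nu> (2 * s) z)"
  proof -
    obtain Q where EQ: "\<forall>b. Et \<nu> (2 * s) b = poly Q b"
      and PQ: "\<forall>b. poly Q (-b) = (-1)^(2 * s) * poly Q b"
      using Et_poly by blast
    have PQ': "\<forall>b. poly Q (-b) = poly Q b" using PQ by simp
    define g where "g z = (\<Sum>k\<le>degree Q. coeff Q k * (if even k then (z^2/((z-1)*(z+1)))^(k div 2) else 0))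
       + (-1)^(2 * s+1) * of_real (a \<nu> (2 * s)) / (of_nat (2 * s) * (4 * KK ((z-1)/2))^s)" for z
    have "g meromorphic_on {1}"
    proof -
      have "(\<lambda>z. coeff Q k * (if even k then (z^2/((z-1)*(z+1)))^(k div 2) else 0)) meromorphic_on {1}" for k
        by (cases "even k") (auto intro!: meromorphic_intros mB)
      then have S: "(\<lambda>z. \<Sum>k\<le>degree Q. coeff Q k * (if even k then (z^2/((z-1)*(z+1)))^(k div 2) else 0)) meromorphic_on {1}"
        by (intro meromorphic_on_sum)
      show ?thesis unfolding g_def[abs_def]
        by (rule meromorphic_on_add[OF S]) (intro meromorphic_intros mK)
    qed
    moreover have "\<forall>\<^sub>F z in at 1. z \<notin> cut \<longrightarrow> g z = calE \<nu> (2 * s) z"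
      unfolding eventually_at
    proof (intro exI[of _ "1/4"] conjI ballI impI)
      fix z :: complex assume z: "z \<noteq> 1 \<and> dist z 1 < 1/4"
      then have z1: "norm (z - 1) < 1/4" "z \<noteq> 1" by (auto simp: dist_norm)
      note pw = pointwise[OF z1]
      have A: "poly Q (beta z) = (\<Sum>k\<le>degree Q. coeff Q k * (if even k then (z^2/((z-1)*(z+1)))^(k div 2) else 0))"
        unfolding poly_even_sum[OF PQ', of "beta z"] pw(3) ..
      have B: "xi z ^ (2 * s) = (4 * KK ((z-1)/2))^s"
        unfolding power_mult pw(1) ..
      show "g z = calE \<nu> (2 * s) z"
        unfolding calE_def g_def EQ[rule_format] A B ..
    qed simp
    ultimately show ?thesis by blast
  qed
qed

end
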